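(* Let $X$ be a fixed $n\times n$ matrix and set $$Z=\sum_{a,b}X_{ab}\,\langle\mathcal{P}_T(e_ae_b^* ),e_ae_b^*\rangle\,e_ae_b^* .$$ Then $\|Z\|\le\frac{2\mu_0r}{n}\|X\|$.
   Context: $U,V\subseteq\mathbb{R}^n$ are $r$-dimensional subspaces with orthogonal projections $P_U,P_V$, with coherences $\mu(U),\mu(V)\le\mu_0$, where $\mu(W)=\frac nr\max_i\|P_We_i\|^2$. $\mathcal{P}_T(Y)=P_UY+YP_V-P_UYP_V$. $e_a$ are standard basis vectors, $\langle A,B\rangle=\mathrm{trace}(A^*B)$, and $\|\cdot\|$ is the spectral norm. *)

theory Defs
  imports "HOL-Analysis.Analysis"
begin

definition is_orth_proj :: "(real^'n) set \<Rightarrow> real^'n^'n \<Rightarrow> bool" where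
  "is_orth_proj W P \<longleftrightarrow>
     (\<forall>x. P *v x \<in> W \<and> (\<forall>w\<in>W. (x - P *v x) \<bullet> w = 0))"

definition coherence :: "(real^'n) set \<Rightarrow> real^'n^'n \<Rightarrow> real" where
  "coherence W P = real CARD('n) / real (dim W) *
      Max (range (\<lambda>i::'n. (norm (P *v axis i 1))\<^sup>2))"

definition unit_mat :: "'n \<Rightarrow> 'n \<Rightarrow> real^'n^'n" where
  "unit_mat a b = (\<chi> i j. if i = a \<and> j = b then 1 else 0)"

definition mat_inner :: "real^'n^'n \<Rightarrow> real^'n^'n \<Rightarrow> real" where
  "mat_inner A B = trace (transpose A ** B)"

definition PT :: "real^'n^'n \<Rightarrow> real^'n^'n \<Rightarrow> real^'n^'n \<Rightarrow> real^'n^'n" where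
  "PT PU PV Y = PU ** Y + Y ** PV - PU ** Y ** PV"

definition spec_norm :: "real^'n^'n \<Rightarrow> real" where
  "spec_norm A = onorm (\<lambda>x. A *v x)"

end

theory Submission
  imports Defs
begin
lemma proj_diag:
  assumes "is_orth_proj W P"
  shows "P$a$a = (norm (P *v axis a 1))\<^sup>2" "P *v axis a 1 \<in> W"
    "axis a 1 \<bullet> (P *v axis a 1) = (norm (P *v axis a 1))\<^sup>2"
proof -
  let ?e = "axis a (1::real)" and ?p = "P *v axis a (1::real)"
  show "?p \<in> W" using assms unfolding is_orth_proj_def by auto
  have "(?e - ?p) \<bullet> ?p = 0" using assms unfolding is_orth_proj_def by auto
  then have "?e \<bullet> ?p = ?p \<bullet> ?p" by (simp add: inner_diff_left)
  then show "?e \<bullet> ?p = (norm ?p)\<^sup>2" by (simp add: power2_norm_eq_inner)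
  moreover have "?e \<bullet> ?p = ?p $ a"
    by (simp add: inner_axis')
  moreover have "?p $ a = P$a$a"
    by (simp add: matrix_vector_mult_def axis_def if_distrib cong: if_cong)
  ultimately show "P$a$a = (norm (P *v axis a 1))\<^sup>2" by (simp add: power2_norm_eq_inner)
qed

lemma proj_diag_bounds:
  fixes P :: "real^'n^'n"
  assumes "is_orth_proj W P" "subspace W" "dim W = r" "coherence W P \<le> \<mu>0"
  shows "0 \<le> P$a$a" "P$a$a \<le> 1" "P$a$a \<le> \<mu>0 * real r / real CARD('n::finite)"
proof -
  let ?e = "axis a (1::real)" and ?p = "P *v axis a (1::real)"
  have d: "P$a$a = (norm ?p)\<^sup>2" and pW: "?p \<in> W" using proj_diag[OF assms(1)] by auto
  show "0 \<le> P$a$a" using d by simp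
  have "(norm ?p)^2 = ?e \<bullet> ?p"
    using proj_diag(3)[OF assms(1)] by simp
  also have "\<dots> \<le> norm ?e * norm ?p" by (rule norm_cauchy_schwarz)
  finally have "(norm ?p)^2 \<le> norm ?p" by simp
  hence "norm ?p \<le> 1" using mult_le_cancel_left1[of "norm ?p" "norm ?p"]
    by (cases "norm ?p = 0") (auto simp: power2_eq_square)
  thus "P$a$a \<le> 1" using d by (simp add: power_le_one)
  show "P$a$a \<le> \<mu>0 * real r / real CARD('n)"
  proof (cases "r = 0")
    case True
    then have "W \<subseteq> {0}" using assms(3) dim_eq_0 by metis
    then have "?p = 0" using pW by auto
    moreover have "0 \<le> coherence W P" unfolding coherence_def
      by (intro mult_nonneg_nonneg) (auto intro: order_trans[OF _ Max_ge[where x="(norm ?p)^2"]])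
    ultimately show ?thesis using d True assms(4) by simp
  next
    case False
    have m: "(norm ?p)^2 \<le> Max (range (\<lambda>i::'n. (norm (P *v axis i 1))\<^sup>2))"
      by (rule Max_ge) auto
    have "real CARD('n) / real r * (norm ?p)^2 \<le> coherence W P"
      unfolding coherence_def assms(3) by (rule mult_left_mono[OF m]) simp
    hence "real CARD('n) / real r * (norm ?p)^2 \<le> \<mu>0" using assms(4) by linarith
    thus ?thesis using d False by (simp add: field_simps)
  qed
qed
lemma if_and0: "(if P \<and> Q then a else (0::real)) = (if P then if Q then a else 0 else 0)" by simp
lemma if_m1: "(if P then a else (0::real)) * c = (if P then a * c else 0)" by simp
lemma if_m2: "c * (if P then a else (0::real)) = (if P then c * a else 0)" by simp
lemma mm_nth: "((A::real^'k^'m) ** B)$i$j = (\<Sum>k\<in>UNIV. A$i$k * B$k$j)"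
  by (simp add: matrix_matrix_mult_def)
lemma unit_nth: "unit_mat a b $ i $ j = (if i = a then if j = b then 1 else 0 else 0)"
  by (simp add: unit_mat_def)

lemma mat_inner_unit: "mat_inner M (unit_mat a b) = M$a$b"
  by (simp add: mat_inner_def trace_def mm_nth transpose_def unit_nth if_m1 if_m2)

lemma unit_left: "((A::real^'n^'m) ** unit_mat a b)$i$j = (if j = b then A$i$a else 0)"
  by (simp add: mm_nth unit_nth if_m1 if_m2)
lemma unit_right: "(unit_mat a b ** (A::real^'m^'n))$i$j = (if i = a then A$b$j else 0)"
  by (simp add: mm_nth unit_nth if_m1 if_m2)

lemma PT_entry: "mat_inner (PT PU PV (unit_mat a b)) (unit_mat a b) = PU$a$a + PV$b$b - PU$a$a * PV$b$b"
  by (simp add: mat_inner_unit PT_def mm_nth unit_nth if_m1 if_m2)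

lemma Z_entry: "(\<Sum>a\<in>UNIV. \<Sum>b\<in>UNIV. (f a b) *\<^sub>R unit_mat a b) $ i $ j = (f i j :: real)"
  proof -
  have "(\<Sum>b\<in>UNIV. f x b * unit_mat x b $ i $ j) = (if x = i then f i j else 0)" for x
    by (cases "x = i") (simp_all add: unit_nth if_m1 if_m2)
  then show ?thesis by simp
qed
lemma diag_bound:
  fixes z :: "real^'n"
  assumes "\<And>i. \<bar>d i\<bar> \<le> c"
  shows "norm (\<chi> i. d i * z$i) \<le> c * norm z"
proof -
  obtain i0 :: 'n where True by simp
  have c0: "0 \<le> c" using assms[of i0] by linarith
  have "norm (\<chi> i. d i * z$i) \<le> norm (c *\<^sub>R z)"
    by (rule norm_le_componentwise_cart)
       (use assms c0 in \<open>simp add: abs_mult mult_right_mono\<close>)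
  thus ?thesis using c0 by simp
qed

lemma spec_bound: "norm (X *v x) \<le> spec_norm X * norm x"
  unfolding spec_norm_def by (rule onorm) simp

theorem lemma6p3:
  fixes U V :: "(real^'n) set" and PU PV X :: "real^'n^'n"
    and r :: nat and \<mu>0 :: real
  assumes "subspace U" and "subspace V"
    and "dim U = r" and "dim V = r"
    and "is_orth_proj U PU" and "is_orth_proj V PV"
    and "coherence U PU \<le> \<mu>0" and "coherence V PV \<le> \<mu>0"
  shows "spec_norm (\<Sum>a\<in>UNIV. \<Sum>b\<in>UNIV.
            (X $ a $ b * mat_inner (PT PU PV (unit_mat a b)) (unit_mat a b)) *\<^sub>R unit_mat a b)
         \<le> 2 * \<mu>0 * real r / real CARD('n) * spec_norm X"
proof -
  define u where "u a = PU$a$a" for a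
  define v where "v b = PV$b$b" for b
  define c where "c = \<mu>0 * real r / real CARD('n)"
  define Z where "Z = (\<Sum>a\<in>UNIV. \<Sum>b\<in>UNIV.
            (X $ a $ b * mat_inner (PT PU PV (unit_mat a b)) (unit_mat a b)) *\<^sub>R unit_mat a b)"
  have u: "0 \<le> u a" "u a \<le> 1" "u a \<le> c" for a
    using proj_diag_bounds[OF assms(5,1,3,7)] unfolding u_def c_def by auto
  have v: "0 \<le> v a" "v a \<le> 1" "v a \<le> c" for a
    using proj_diag_bounds[OF assms(6,2,4,8)] unfolding v_def c_def by auto
  have Zij: "Z$i$j = X$i$j * (u i + v j - u i * v j)" for i j
    unfolding Z_def by (simp only: Z_entry PT_entry u_def v_def)
  have s0: "0 \<le> spec_norm X" unfolding spec_norm_def by (rule onorm_pos_le) simp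
  have "norm (Z *v x) \<le> (2 * c * spec_norm X) * norm x" for x
  proof -
    define y where "y = (\<chi> j. v j * x$j)"
    have eq: "Z *v x = (\<chi> i. u i * (X *v x)$i) + (\<chi> i. (1 - u i) * (X *v y)$i)"
      by (simp add: vec_eq_iff matrix_vector_mult_def Zij y_def sum_distrib_left
          sum.distrib[symmetric] algebra_simps)
    have "norm (Z *v x) \<le> norm (\<chi> i. u i * (X *v x)$i) + norm (\<chi> i. (1 - u i) * (X *v y)$i)"
      unfolding eq by (rule norm_triangle_ineq)
    also have "\<dots> \<le> c * norm (X *v x) + 1 * norm (X *v y)"
      by (intro add_mono diag_bound) (use u in auto)
    also have "\<dots> \<le> c * (spec_norm X * norm x) + spec_norm X * (c * norm x)"
    proof (intro add_mono)
      have c0: "0 \<le> c" using u(1)[of undefined] u(3)[of undefined] by linarith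
      show "c * norm (X *v x) \<le> c * (spec_norm X * norm x)"
        by (rule mult_left_mono[OF spec_bound c0])
      have "norm y \<le> c * norm x" unfolding y_def by (rule diag_bound) (use v in auto)
      then show "1 * norm (X *v y) \<le> spec_norm X * (c * norm x)"
        using spec_bound[of X y] mult_left_mono[OF _ s0] by fastforce
    qed
    finally show ?thesis by (simp add: algebra_simps)
  qed
  then have "spec_norm Z \<le> 2 * c * spec_norm X"
    unfolding spec_norm_def by (rule onorm_le)
  then show ?thesis unfolding Z_def c_def by (simp add: algebra_simps)
qed
end
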